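(* Let $G$ be a finite, connected, simple, bridgeless, triangle-free cubic graph, and let $\Lambda$ be a valid labeling of $\mathfrak{L}_2(G)$. Let $\mathfrak{G}_\Lambda$ be the graph with vertex set $\Gamma_\Lambda$ in which $\gamma,\phi\in\Gamma_\Lambda$ are joined by a single edge (a loop if $\gamma=\phi$) if and only if $\gamma$ and $\phi$ are adjacent. Then $\mathfrak{G}_\Lambda$ is a connected graph, simple apart from possible loops.
   Context: $\mathcal{L}(H)$ is the line graph of $H$. Let $\mathcal{T}$ be the set of triangles of $\mathcal{L}(\mathcal{L}(G))$ formed by the three edges of a triangle of $\mathcal{L}(G)$. $\mathfrak{L}_2(G)$ has the vertex set of $\mathcal{L}(\mathcal{L}(G))$ and the edges of $\mathcal{L}(\mathcal{L}(G))$ not in any triangle of $\mathcal{T}$. For each edge $e$ of $G$, the reduced clique $\mathbb{X}_e$ is the subgraph of $\mathfrak{L}_2(G)$ on the four edges of $\mathcal{L}(G)$ incident to $e$, with all edges of $\mathfrak{L}_2(G)$ among them (a 4-cycle); $\mathcal{X}$ is the set of reduced cliques. A labeling $\Lambda$ gives each edge of $\mathfrak{L}_2(G)$ a label in $\{0,1\}$ ($1$ = open); it is valid if in every reduced clique each vertex is incident to two edges of that clique with different labels. $\Gamma_\Lambda$ is the set of connected components (cycles) of the subgraph formed by the open edges. Two cycles $\gamma_1,\gamma_2\in\Gamma_\Lambda$ are adjacent if there is a reduced clique $\mathbb{X}\in\mathcal{X}$ containing an edge of $\gamma_1$ and an edge of $\gamma_2$. *)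

theory Defs
  imports Main
begin

definition simple_graph :: "'a set \<Rightarrow> 'a set set \<Rightarrow> bool" where
  "simple_graph V E \<longleftrightarrow> finite V \<and>
     E \<subseteq> {{u, v} | u v. u \<in> V \<and> v \<in> V \<and> u \<noteq> v}"

definition graph_adj :: "'a set set \<Rightarrow> ('a \<times> 'a) set" where
  "graph_adj E = {(u, v). {u, v} \<in> E}"

definition graph_connected :: "'a set \<Rightarrow> 'a set set \<Rightarrow> bool" where
  "graph_connected V E \<longleftrightarrow> V \<noteq> {} \<and>
     (\<forall>u\<in>V. \<forall>v\<in>V. (u, v) \<in> (graph_adj E)\<^sup>*)"

definition bridgeless :: "'a set \<Rightarrow> 'a set set \<Rightarrow> bool" where
  "bridgeless V E \<longleftrightarrow> (\<forall>e\<in>E. graph_connected V (E - {e}))"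

definition cubic :: "'a set \<Rightarrow> 'a set set \<Rightarrow> bool" where
  "cubic V E \<longleftrightarrow> (\<forall>v\<in>V. card {e\<in>E. v \<in> e} = 3)"

definition triangle_free :: "'a set set \<Rightarrow> bool" where
  "triangle_free E \<longleftrightarrow> \<not> (\<exists>u v w. {u, v} \<in> E \<and> {v, w} \<in> E \<and> {u, w} \<in> E)"

text \<open>The line graph of a graph with edge set E has vertex set E and edge set
  \<open>line_edges E\<close>: two distinct edges are adjacent iff they share an endpoint.\<close>

definition line_edges :: "'v set set \<Rightarrow> 'v set set set" where
  "line_edges E = {{e, f} | e f. e \<in> E \<and> f \<in> E \<and> e \<noteq> f \<and> e \<inter> f \<noteq> {}}"

definition LG_triangles :: "'a set set \<Rightarrow> 'a set set set" where
  "LG_triangles E = {{x, y, z} | x y z. x \<noteq> y \<and> y \<noteq> z \<and> x \<noteq> z \<and>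
      {x, y} \<in> line_edges E \<and> {y, z} \<in> line_edges E \<and> {x, z} \<in> line_edges E}"

text \<open>The set T: triangles of L(L(G)) formed by the three edges of a triangle of L(G),
  each given by its set of (three) edges in L(L(G)).\<close>

definition T_triangle_edges :: "'a set set \<Rightarrow> 'a set set set set set" where
  "T_triangle_edges E = {{{{x, y}, {y, z}}, {{y, z}, {x, z}}, {{x, y}, {x, z}}} | x y z.
      {x, y, z} \<in> LG_triangles E \<and> x \<noteq> y \<and> y \<noteq> z \<and> x \<noteq> z}"

text \<open>Edges of \<open>\<frakL>\<^sub>2(G)\<close>: edges of L(L(G)) not in any triangle of T.
  Its vertex set is the vertex set of L(L(G)), i.e. \<open>line_edges E\<close>.\<close>

definition L2_edges :: "'a set set \<Rightarrow> 'a set set set set" where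
  "L2_edges E = {q \<in> line_edges (line_edges E). \<not> (\<exists>t \<in> T_triangle_edges E. q \<in> t)}"

definition rc_verts :: "'a set set \<Rightarrow> 'a set \<Rightarrow> 'a set set set" where
  "rc_verts E e = {p \<in> line_edges E. e \<in> p}"

definition rc_edges :: "'a set set \<Rightarrow> 'a set \<Rightarrow> 'a set set set set" where
  "rc_edges E e = {q \<in> L2_edges E. q \<subseteq> rc_verts E e}"

definition labeling :: "'a set set \<Rightarrow> ('a set set set \<Rightarrow> nat) \<Rightarrow> bool" where
  "labeling E \<Lambda> \<longleftrightarrow> (\<forall>q \<in> L2_edges E. \<Lambda> q \<in> {0, 1})"

definition valid_labeling :: "'a set set \<Rightarrow> ('a set set set \<Rightarrow> nat) \<Rightarrow> bool" where
  "valid_labeling E \<Lambda> \<longleftrightarrow> labeling E \<Lambda> \<and>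
     (\<forall>e \<in> E. \<forall>v \<in> rc_verts E e. \<exists>q1 \<in> rc_edges E e. \<exists>q2 \<in> rc_edges E e.
         v \<in> q1 \<and> v \<in> q2 \<and> \<Lambda> q1 \<noteq> \<Lambda> q2)"

definition open_edges :: "'a set set \<Rightarrow> ('a set set set \<Rightarrow> nat) \<Rightarrow> 'a set set set set" where
  "open_edges E \<Lambda> = {q \<in> L2_edges E. \<Lambda> q = 1}"

text \<open>Connected components of the subgraph formed by the open edges, each component
  represented by its set of (open) edges.\<close>

definition open_touch :: "'a set set \<Rightarrow> ('a set set set \<Rightarrow> nat) \<Rightarrow>
    ('a set set set \<times> 'a set set set) set" where
  "open_touch E \<Lambda> = {(q, q'). q \<in> open_edges E \<Lambda> \<and> q' \<in> open_edges E \<Lambda> \<and> q \<inter> q' \<noteq> {}}"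

definition cycles :: "'a set set \<Rightarrow> ('a set set set \<Rightarrow> nat) \<Rightarrow> 'a set set set set set" where
  "cycles E \<Lambda> = {{q' \<in> open_edges E \<Lambda>. (q, q') \<in> (open_touch E \<Lambda>)\<^sup>*} | q. q \<in> open_edges E \<Lambda>}"

definition cycles_adjacent :: "'a set set \<Rightarrow> 'a set set set set \<Rightarrow> 'a set set set set \<Rightarrow> bool" where
  "cycles_adjacent E \<gamma>1 \<gamma>2 \<longleftrightarrow>
     (\<exists>e \<in> E. (\<exists>q1 \<in> \<gamma>1. q1 \<in> rc_edges E e) \<and> (\<exists>q2 \<in> \<gamma>2. q2 \<in> rc_edges E e))"

text \<open>Edge relation of the cycle graph \<open>\<frakG>\<^sub>\<Lambda>\<close> (one edge per adjacent pair, loops allowed).\<close>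

definition cycle_graph_rel :: "'a set set \<Rightarrow> ('a set set set \<Rightarrow> nat) \<Rightarrow>
    ('a set set set set \<times> 'a set set set set) set" where
  "cycle_graph_rel E \<Lambda> = {(\<gamma>, \<phi>). \<gamma> \<in> cycles E \<Lambda> \<and> \<phi> \<in> cycles E \<Lambda> \<and> cycles_adjacent E \<gamma> \<phi>}"

end

theory Submission
  imports Defs
begin

definition cyc_of where
  "cyc_of E \<Lambda> q = {q' \<in> open_edges E \<Lambda>. (q, q') \<in> (open_touch E \<Lambda>)\<^sup>*}"

definition Ccl where
  "Ccl E \<Lambda> e = {\<gamma> \<in> cycles E \<Lambda>. \<exists>q\<in>\<gamma>. q \<in> rc_edges E e}"

lemma cyc_in: "q \<in> open_edges E \<Lambda> \<Longrightarrow> cyc_of E \<Lambda> q \<in> cycles E \<Lambda>"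
  unfolding cycles_def cyc_of_def by blast

lemma cyc_self: "q \<in> open_edges E \<Lambda> \<Longrightarrow> q \<in> cyc_of E \<Lambda> q"
  unfolding cyc_of_def by blast

lemma cyc_touch: "(q, q') \<in> open_touch E \<Lambda> \<Longrightarrow> q' \<in> cyc_of E \<Lambda> q"
  unfolding cyc_of_def open_touch_def by auto

lemma open_at:
  assumes "valid_labeling E \<Lambda>" "e \<in> E" "p \<in> rc_verts E e"
  shows "\<exists>q\<in>rc_edges E e. p \<in> q \<and> q \<in> open_edges E \<Lambda>"
proof -
  from assms obtain q1 q2 where q: "q1 \<in> rc_edges E e" "q2 \<in> rc_edges E e" "p \<in> q1" "p \<in> q2"
    "\<Lambda> q1 \<noteq> \<Lambda> q2" unfolding valid_labeling_def by blast
  have "q1 \<in> L2_edges E" "q2 \<in> L2_edges E" using q unfolding rc_edges_def by auto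
  then have "\<Lambda> q1 \<in> {0,1}" "\<Lambda> q2 \<in> {0,1}" using assms(1) unfolding valid_labeling_def labeling_def by auto
  then have "\<Lambda> q1 = 1 \<or> \<Lambda> q2 = 1" using q(5) by auto
  then show ?thesis using q \<open>q1 \<in> L2_edges E\<close> \<open>q2 \<in> L2_edges E\<close> unfolding open_edges_def by blast
qed

lemma shared:
  assumes "valid_labeling E \<Lambda>" "e \<in> E" "f \<in> E" "e \<noteq> f" "e \<inter> f \<noteq> {}"
  shows "\<exists>\<gamma>. \<gamma> \<in> Ccl E \<Lambda> e \<and> \<gamma> \<in> Ccl E \<Lambda> f"
proof -
  have p: "{e,f} \<in> line_edges E" using assms unfolding line_edges_def by blast
  have pe: "{e,f} \<in> rc_verts E e" "{f,e} \<in> rc_verts E f" using p unfolding rc_verts_def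
    by (auto simp: insert_commute)
  obtain q1 where q1: "q1 \<in> rc_edges E e" "{e,f} \<in> q1" "q1 \<in> open_edges E \<Lambda>"
    using open_at[OF assms(1,2) pe(1)] by blast
  obtain q2 where q2: "q2 \<in> rc_edges E f" "{e,f} \<in> q2" "q2 \<in> open_edges E \<Lambda>"
    using open_at[OF assms(1,3) pe(2)] by (auto simp: insert_commute)
  have "(q1, q2) \<in> open_touch E \<Lambda>" using q1 q2 unfolding open_touch_def by blast
  then have "q2 \<in> cyc_of E \<Lambda> q1" by (rule cyc_touch)
  then show ?thesis using cyc_in[OF q1(3)] cyc_self[OF q1(3)] q1 q2 unfolding Ccl_def by blast
qed

lemma Ccl_rel: "\<gamma> \<in> Ccl E \<Lambda> e \<Longrightarrow> \<phi> \<in> Ccl E \<Lambda> e \<Longrightarrow> e \<in> E \<Longrightarrow> (\<gamma>, \<phi>) \<in> cycle_graph_rel E \<Lambda>"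
  unfolding Ccl_def cycle_graph_rel_def cycles_adjacent_def by blast

definition Radj where
  "Radj E = {(e, f). e \<in> E \<and> f \<in> E \<and> e \<noteq> f \<and> e \<inter> f \<noteq> {}}"

lemma path_lift:
  assumes "(e, e') \<in> (Radj E)\<^sup>*" "valid_labeling E \<Lambda>" "e \<in> E"
  shows "\<forall>\<gamma>\<in>Ccl E \<Lambda> e. \<forall>\<phi>\<in>Ccl E \<Lambda> e'. (\<gamma>, \<phi>) \<in> (cycle_graph_rel E \<Lambda>)\<^sup>*"
  using assms(1)
proof (induction rule: rtrancl_induct)
  case base
  then show ?case using Ccl_rel assms(3) by blast
next
  case (step f g)
  show ?case
  proof (intro ballI)
    fix \<gamma> \<phi> assume g: "\<gamma> \<in> Ccl E \<Lambda> e" "\<phi> \<in> Ccl E \<Lambda> g"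
    have fg: "f \<in> E" "g \<in> E" "f \<noteq> g" "f \<inter> g \<noteq> {}" using step(2) unfolding Radj_def by auto
    obtain \<psi> where "\<psi> \<in> Ccl E \<Lambda> f" "\<psi> \<in> Ccl E \<Lambda> g" using shared[OF assms(2) fg] by blast
    then have "(\<gamma>, \<psi>) \<in> (cycle_graph_rel E \<Lambda>)\<^sup>*" "(\<psi>, \<phi>) \<in> cycle_graph_rel E \<Lambda>"
      using step(3) g Ccl_rel fg by blast+
    then show "(\<gamma>, \<phi>) \<in> (cycle_graph_rel E \<Lambda>)\<^sup>*" by simp
  qed
qed

lemma vert_path:
  assumes "(u, w) \<in> (graph_adj E)\<^sup>*" "u \<in> e" "e \<in> E"
  shows "\<exists>e'\<in>E. w \<in> e' \<and> (e, e') \<in> (Radj E)\<^sup>*"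
  using assms(1)
proof (induction rule: rtrancl_induct)
  case base
  then show ?case using assms by blast
next
  case (step v w)
  then obtain e'' where e'': "e'' \<in> E" "v \<in> e''" "(e, e'') \<in> (Radj E)\<^sup>*" by blast
  have f: "{v,w} \<in> E" using step(2) unfolding graph_adj_def by simp
  show ?case
  proof (cases "{v,w} = e''")
    case True then show ?thesis using e'' by blast
  next
    case False
    then have "(e'', {v,w}) \<in> Radj E" using e'' f unfolding Radj_def by blast
    then show ?thesis using e'' f by (meson insertI1 insertI2 rtrancl.rtrancl_into_rtrancl)
  qed
qed

theorem lemma2p11:
  fixes V :: "'a set" and E :: "'a set set"
    and \<Lambda> :: "'a set set set \<Rightarrow> nat"
  assumes "simple_graph V E"
    and "graph_connected V E"
    and "bridgeless V E"
    and "triangle_free E"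
    and "cubic V E"
    and "valid_labeling E \<Lambda>"
  shows "cycles E \<Lambda> \<noteq> {} \<and>
         (\<forall>\<gamma> \<in> cycles E \<Lambda>. \<forall>\<phi> \<in> cycles E \<Lambda>. (\<gamma>, \<phi>) \<in> (cycle_graph_rel E \<Lambda>)\<^sup>*)"
proof
  obtain v where v: "v \<in> V" using assms(2) unfolding graph_connected_def by blast
  have "card {e\<in>E. v \<in> e} = 3" using assms(5) v unfolding cubic_def by blast
  then obtain e f where ef: "e \<in> E" "f \<in> E" "v \<in> e" "v \<in> f" "e \<noteq> f"
  proof -
    have "2 \<le> card {e\<in>E. v \<in> e}" using \<open>card {e\<in>E. v \<in> e} = 3\<close> by simp
    then obtain S where "S \<subseteq> {e\<in>E. v \<in> e}" "card S = 2"
      by (meson obtain_subset_with_card_n)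
    then obtain x y where "S = {x,y}" "x \<noteq> y" by (meson card_2_iff)
    then show ?thesis using that \<open>S \<subseteq> {e\<in>E. v \<in> e}\<close> by blast
  qed
  then obtain \<gamma> where "\<gamma> \<in> Ccl E \<Lambda> e" using shared[OF assms(6) ef(1,2,5)] by blast
  then show "cycles E \<Lambda> \<noteq> {}" unfolding Ccl_def by blast
next
  have inC: "\<exists>e\<in>E. \<gamma> \<in> Ccl E \<Lambda> e" if gc: "\<gamma> \<in> cycles E \<Lambda>" for \<gamma>
  proof -
    obtain q where q: "q \<in> open_edges E \<Lambda>" "\<gamma> = cyc_of E \<Lambda> q"
      using gc unfolding cycles_def cyc_of_def by blast
    have "q \<in> line_edges (line_edges E)" using q(1) unfolding open_edges_def L2_edges_def by blast
    then have "\<exists>p1 p2. q = {p1,p2} \<and> p1 \<in> line_edges E \<and> p2 \<in> line_edges E \<and> p1 \<inter> p2 \<noteq> {}"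
      unfolding line_edges_def[of "line_edges E"] by auto
    then obtain p1 p2 where p: "q = {p1,p2}" "p1 \<in> line_edges E" "p2 \<in> line_edges E" "p1 \<inter> p2 \<noteq> {}"
      by blast
    then obtain x where x: "x \<in> p1" "x \<in> p2" by blast
    have xE: "x \<in> E" using x(1) p(2) unfolding line_edges_def by blast
    have "q \<subseteq> rc_verts E x" using p x unfolding rc_verts_def by auto
    then have "q \<in> rc_edges E x" using q(1) unfolding rc_edges_def open_edges_def by simp
    then show ?thesis using xE q cyc_in cyc_self unfolding Ccl_def by blast
  qed
  show "\<forall>\<gamma> \<in> cycles E \<Lambda>. \<forall>\<phi> \<in> cycles E \<Lambda>. (\<gamma>, \<phi>) \<in> (cycle_graph_rel E \<Lambda>)\<^sup>*"
  proof (intro ballI)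
    fix \<gamma> \<phi> assume g: "\<gamma> \<in> cycles E \<Lambda>" "\<phi> \<in> cycles E \<Lambda>"
    obtain e e' where e: "e \<in> E" "e' \<in> E" "\<gamma> \<in> Ccl E \<Lambda> e" "\<phi> \<in> Ccl E \<Lambda> e'"
      using inC g by blast
    have sg: "E \<subseteq> {{u, v} | u v. u \<in> V \<and> v \<in> V \<and> u \<noteq> v}" using assms(1) unfolding simple_graph_def by simp
    obtain a b where ab: "e = {a,b}" "a \<in> V" using subsetD[OF sg e(1)] by blast
    obtain c d where cd: "e' = {c,d}" "c \<in> V" using subsetD[OF sg e(2)] by blast
    have "(a, c) \<in> (graph_adj E)\<^sup>*" using assms(2) ab cd unfolding graph_connected_def by blast
    then obtain e'' where e'': "e'' \<in> E" "c \<in> e''" "(e, e'') \<in> (Radj E)\<^sup>*"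
      using vert_path[of a c E e] ab e by blast
    have "(e, e') \<in> (Radj E)\<^sup>*"
    proof (cases "e'' = e'")
      case True then show ?thesis using e'' by simp
    next
      case False
      have "c \<in> e'' \<inter> e'" using e''(2) cd(1) by simp
      then have "(e'', e') \<in> Radj E" using e''(1) e(2) False unfolding Radj_def by blast
      then show ?thesis using e'' by (meson rtrancl.rtrancl_into_rtrancl)
    qed
    then show "(\<gamma>, \<phi>) \<in> (cycle_graph_rel E \<Lambda>)\<^sup>*" using path_lift assms(6) e by blast
  qed
qed

end
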